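(* Let $d>0$, let $J$ satisfy (J) and (J2), let $f$ satisfy (f3), let $c_*$ be the minimal traveling wave speed, and fix $c\in(0,c_* )$ and a constant $M$ as in the context. For each $\sigma\in(0,1)$ let $\phi_\sigma=\lim_{n\to\infty}A_\sigma^n[\phi_*^\sigma]$ be the solution obtained by the iteration described in the context. Then there exists $\delta_0\in(0,1]$ such that $$\phi_\sigma(x)\ge\phi_\sigma(y)\ \text{ whenever } x\le y\le0,\ \sigma\in(0,\delta_0),$$ and $$\phi_{\sigma_1}(x)\le\phi_{\sigma_2}(x)\ \text{ whenever } 0<\sigma_1\le\sigma_2<1,\ x\le0.$$
   Context: Condition (J): $J\in C(\mathbb{R})\cap L^\infty(\mathbb{R})$, $J\ge 0$, $J(0)>0$, $\int_{\mathbb{R}}J=1$, $J$ even. Condition (J2): there exists $\lambda>0$ with $\int_{\mathbb{R}}J(x)e^{\lambda x}dx<\infty$. Condition (f3): $f\in C^1([0,\infty))$, $f(0)=f(1)=0$, $f>0$ in $(0,1)$, $f'(0)>0>f'(1)$, $f(u)/u$ nonincreasing in $u>0$. Known fact: under (J), (J2), (f3) there is $c_*>0$ such that $d\int_{\mathbb{R}}J(x-y)\phi(y)dy-d\phi(x)+c\phi'(x)+f(\phi(x))=0$ on $\mathbb{R}$, $\phi(-\infty)=1$, $\phi(+\infty)=0$, has a nonincreasing bounded solution iff $c\ge c_*$; such solutions are $C^1$. Construction (for fixed $c\in(0,c_* )$): $M>0$ is chosen so that $\tilde f(u):=(cM-d)u+f(u)$ is increasing on $[0,1]$; $a(x)=\int_{-\infty}^xJ(y)dy$.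 For $\sigma\in(0,1)$, $A_\sigma$ acts on $\{\phi\in C(\mathbb{R}):0\le\phi\le1\}$ by $A_\sigma[\phi](x)=\sigma$ for $x\ge0$ and, for $x<0$, $A_\sigma[\phi](x)=e^{Mx}\sigma+\frac{e^{Mx}}{c}\int_x^0e^{-M\xi}\big[d\int_{-\infty}^0J(\xi-y)\phi(y)dy+d\sigma a(\xi)+\tilde f(\phi(\xi))\big]d\xi$. Fix one nonincreasing traveling wave $\psi$ with speed $c_*$; for each $\sigma$ let $\phi_{*\sigma}$ be the translate of $\psi$ with $\phi_{*\sigma}(0)=\sigma$ and $\phi_*^\sigma=\max\{\phi_{*\sigma},\sigma\}$. The limit $\phi_\sigma$ exists and solves $d\int_{\mathbb{R}}J(x-y)\phi(y)dy-d\phi+c\phi'+f(\phi)=0$ for $x<0$, $\phi(-\infty)=1$, $\phi=\sigma$ on $[0,\infty)$. *)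

theory Defs
  imports "HOL-Analysis.Analysis"
begin

definition kernel_J :: "(real \<Rightarrow> real) \<Rightarrow> bool" where
  "kernel_J J \<longleftrightarrow> continuous_on UNIV J \<and> bounded (range J) \<and> (\<forall>x. 0 \<le> J x) \<and> J 0 > 0
     \<and> integrable lborel J \<and> integral\<^sup>L lborel J = 1 \<and> (\<forall>x. J (- x) = J x)"

text \<open>Condition (J2): finite exponential moment (J is nonnegative, so finiteness = integrability).\<close>
definition kernel_J2 :: "(real \<Rightarrow> real) \<Rightarrow> bool" where
  "kernel_J2 J \<longleftrightarrow> (\<exists>lam>0. integrable lborel (\<lambda>x. J x * exp (lam * x)))"

definition reaction_f3 :: "(real \<Rightarrow> real) \<Rightarrow> bool" where
  "reaction_f3 f \<longleftrightarrow>
     (\<exists>f'. continuous_on {0..} f' \<and> (\<forall>u\<ge>0. (f has_real_derivative f' u) (at u within {0..}))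
        \<and> f' 0 > 0 \<and> f' 1 < 0)
     \<and> f 0 = 0 \<and> f 1 = 0 \<and> (\<forall>u. 0 < u \<and> u < 1 \<longrightarrow> f u > 0)
     \<and> (\<forall>u v. 0 < u \<and> u \<le> v \<longrightarrow> f v / v \<le> f u / u)"

definition travwave :: "(real \<Rightarrow> real) \<Rightarrow> real \<Rightarrow> (real \<Rightarrow> real) \<Rightarrow> real \<Rightarrow> (real \<Rightarrow> real) \<Rightarrow> bool" where
  "travwave J d f c \<phi> \<longleftrightarrow>
     bounded (range \<phi>) \<and> antimono \<phi> \<and> (\<forall>x. \<phi> differentiable at x)
     \<and> (\<forall>x. d * (LINT y|lborel. J (x - y) * \<phi> y) - d * \<phi> x + c * deriv \<phi> x + f (\<phi> x) = 0)
     \<and> (\<phi> \<longlongrightarrow> 1) at_bot \<and> (\<phi> \<longlongrightarrow> 0) at_top"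

definition min_speed :: "(real \<Rightarrow> real) \<Rightarrow> real \<Rightarrow> (real \<Rightarrow> real) \<Rightarrow> real" where
  "min_speed J d f = Inf {c. \<exists>\<phi>. travwave J d f c \<phi>}"

definition ftilde :: "real \<Rightarrow> real \<Rightarrow> real \<Rightarrow> (real \<Rightarrow> real) \<Rightarrow> real \<Rightarrow> real" where
  "ftilde d c M f u = (c * M - d) * u + f u"

definition acum :: "(real \<Rightarrow> real) \<Rightarrow> real \<Rightarrow> real" where
  "acum J x = (LBINT y:{..x}. J y)"

definition A_op :: "(real \<Rightarrow> real) \<Rightarrow> real \<Rightarrow> real \<Rightarrow> real \<Rightarrow> (real \<Rightarrow> real) \<Rightarrow> real
    \<Rightarrow> (real \<Rightarrow> real) \<Rightarrow> real \<Rightarrow> real" where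
  "A_op J d c M f \<sigma> \<phi> x =
     (if 0 \<le> x then \<sigma>
      else exp (M * x) * \<sigma> + exp (M * x) / c *
        (LBINT \<xi>=x..0. exp (- M * \<xi>) *
           (d * (LBINT y:{..0}. J (\<xi> - y) * \<phi> y) + d * \<sigma> * acum J \<xi> + ftilde d c M f (\<phi> \<xi>))))"

text \<open>phi_sigma as the pointwise limit of the iteration starting from max(translate of psi, sigma);
  sh sigma is a shift with psi (sh sigma) = sigma, so psi(x + sh sigma) is the translate equal to sigma at 0.\<close>
definition phi_sig :: "(real \<Rightarrow> real) \<Rightarrow> real \<Rightarrow> real \<Rightarrow> real \<Rightarrow> (real \<Rightarrow> real) \<Rightarrow> (real \<Rightarrow> real)
    \<Rightarrow> (real \<Rightarrow> real) \<Rightarrow> real \<Rightarrow> real \<Rightarrow> real" where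
  "phi_sig J d c M f \<psi> sh \<sigma> x =
     lim (\<lambda>n. ((A_op J d c M f \<sigma>) ^^ n) (\<lambda>z. max (\<psi> (z + sh \<sigma>)) \<sigma>) x)"

end

theory Submission imports Defs begin

lemma J_meas: "kernel_J J \<Longrightarrow> J \<in> borel_measurable borel"
  unfolding kernel_J_def by (auto intro: borel_measurable_continuous_onI)

lemma J_shift_int: assumes "kernel_J J" shows "integrable lborel (\<lambda>y. J (\<xi> - y))"
proof -
  have "integrable lborel J" using assms unfolding kernel_J_def by auto
  from lborel_integrable_real_affine[OF this, of "-1" \<xi>] show ?thesis by simp
qed

lemma J_shift_integral: assumes "kernel_J J" shows "(LINT y|lborel. J (\<xi> - y)) = 1"
proof -
  have "(LINT y|lborel. J y) = 1" using assms unfolding kernel_J_def by auto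
  moreover have "(LINT y|lborel. J y) = \<bar>-1\<bar> *\<^sub>R (LINT y|lborel. J (\<xi> + (-1) * y))"
    by (rule lborel_integral_real_affine) simp
  ultimately show ?thesis by simp
qed

lemma J_conv_int: assumes "kernel_J J" and m: "p \<in> borel_measurable borel" and b: "\<And>y. \<bar>p y\<bar> \<le> 1"
  shows "integrable lborel (\<lambda>y. J (\<xi> - y) * p y)"
proof (rule Bochner_Integration.integrable_bound[OF J_shift_int[OF assms(1), of \<xi>]])
  have [measurable]: "J \<in> borel_measurable borel" using J_meas[OF assms(1)] .
  show "(\<lambda>y. J (\<xi> - y) * p y) \<in> borel_measurable lborel" using m by measurable
  show "AE x in lborel. norm (J (\<xi> - x) * p x) \<le> norm (J (\<xi> - x))"
    using b assms(1) unfolding kernel_J_def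
    by (auto simp: abs_mult intro!: mult_left_le)
qed

lemma acum_refl: assumes "kernel_J J" shows "acum J \<xi> = (LINT y|lborel. indicator {0..} y * J (\<xi> - y))"
proof -
  have "acum J \<xi> = (LINT y|lborel. indicator {..\<xi>} y *\<^sub>R J y)"
    unfolding acum_def set_lebesgue_integral_def by simp
  also have "\<dots> = \<bar>-1\<bar> *\<^sub>R (LINT y|lborel. indicator {..\<xi>} (\<xi> + (-1) * y) *\<^sub>R J (\<xi> + (-1) * y))"
    by (rule lborel_integral_real_affine) simp
  also have "\<dots> = (LINT y|lborel. indicator {0..} y * J (\<xi> - y))"
    by (simp, intro Bochner_Integration.integral_cong) (auto simp: indicator_def)
  finally show ?thesis .
qed

definition extd :: "real \<Rightarrow> (real \<Rightarrow> real) \<Rightarrow> real \<Rightarrow> real" where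
  "extd \<sigma> \<phi> y = (if y < 0 then \<phi> y else \<sigma>)"

definition conv :: "(real \<Rightarrow> real) \<Rightarrow> (real \<Rightarrow> real) \<Rightarrow> real \<Rightarrow> real" where
  "conv J p \<xi> = (LINT y|lborel. J (\<xi> - y) * p y)"

lemma Cform: assumes J: "kernel_J J" and m[measurable]: "\<phi> \<in> borel_measurable borel"
  and b: "\<And>y. \<bar>\<phi> y\<bar> \<le> 1" and s: "\<bar>\<sigma>\<bar> \<le> 1"
  shows "(LBINT y:{..0}. J (\<xi> - y) * \<phi> y) + \<sigma> * acum J \<xi> = conv J (extd \<sigma> \<phi>) \<xi>"
proof -
  have [measurable]: "J \<in> borel_measurable borel" using J_meas[OF J] .
  have "(LBINT y:{..0}. J (\<xi> - y) * \<phi> y) = (LINT y|lborel. indicator {..0} y * (J (\<xi> - y) * \<phi> y))"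
    unfolding set_lebesgue_integral_def by simp
  also have "\<dots> = (LINT y|lborel. J (\<xi> - y) * (indicator {..<0} y * \<phi> y))"
    apply (rule integral_cong_AE)
      apply measurable
    using AE_lborel_singleton[of 0] by eventually_elim (auto simp: indicator_def)
  finally have 1: "(LBINT y:{..0}. J (\<xi> - y) * \<phi> y) = (LINT y|lborel. J (\<xi> - y) * (indicator {..<0} y * \<phi> y))" .
  have 2: "\<sigma> * acum J \<xi> = (LINT y|lborel. J (\<xi> - y) * (\<sigma> * indicator {0..} y))"
    unfolding acum_refl[OF J] by (simp add: mult_ac)
  have i1: "integrable lborel (\<lambda>y. J (\<xi> - y) * (indicator {..<0} y * \<phi> y))"
    by (rule J_conv_int[OF J]) (use b in \<open>auto simp: indicator_def abs_mult\<close>)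
  have i2: "integrable lborel (\<lambda>y. J (\<xi> - y) * (\<sigma> * indicator {0..} y))"
    by (rule J_conv_int[OF J]) (use s in \<open>auto simp: indicator_def abs_mult\<close>)
  show ?thesis unfolding 1 2 conv_def
    apply (subst Bochner_Integration.integral_add[OF i1 i2, symmetric])
    by (intro Bochner_Integration.integral_cong) (auto simp: extd_def indicator_def algebra_simps)
qed


lemma conv_mono: assumes J: "kernel_J J" and pm: "p \<in> borel_measurable borel" and qm: "q \<in> borel_measurable borel"
  and pb: "\<And>y. \<bar>p y\<bar> \<le> 1" and qb: "\<And>y. \<bar>q y\<bar> \<le> 1" and le: "\<And>y. p y \<le> q y"
  shows "conv J p \<xi> \<le> conv J q \<xi>"
  unfolding conv_def
proof (rule integral_mono[OF J_conv_int[OF J pm pb] J_conv_int[OF J qm qb]])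
  fix y show "J (\<xi> - y) * p y \<le> J (\<xi> - y) * q y"
    using J le unfolding kernel_J_def by (auto intro: mult_left_mono)
qed

lemma conv_const: assumes J: "kernel_J J" shows "conv J (\<lambda>_. k) \<xi> = k"
  unfolding conv_def using J_shift_integral[OF J, of \<xi>] by simp

lemma conv_meas: assumes J: "kernel_J J" and pm[measurable]: "p \<in> borel_measurable borel"
  shows "conv J p \<in> borel_measurable borel"
proof -
  have [measurable]: "J \<in> borel_measurable borel" using J_meas[OF J] .
  show ?thesis unfolding conv_def[abs_def] by measurable
qed

lemma conv_anti: assumes J: "kernel_J J" and pm: "p \<in> borel_measurable borel"
  and pb: "\<And>y. \<bar>p y\<bar> \<le> 1" and an: "\<And>x y. x \<le> y \<Longrightarrow> p y \<le> p x" and le: "\<xi>1 \<le> \<xi>2"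
  shows "conv J p \<xi>2 \<le> conv J p \<xi>1"
proof -
  have [measurable]: "J \<in> borel_measurable borel" using J_meas[OF J] .
  have [measurable]: "p \<in> borel_measurable borel" using pm .
  have r: "conv J p \<xi> = (LINT t|lborel. J t * p (\<xi> - t))" for \<xi>
  proof -
    have "conv J p \<xi> = \<bar>-1\<bar> *\<^sub>R (LINT t|lborel. J (\<xi> - (\<xi> + (-1) * t)) * p (\<xi> + (-1) * t))"
      unfolding conv_def by (rule lborel_integral_real_affine) simp
    then show ?thesis by simp
  qed
  have i: "integrable lborel (\<lambda>t. J t * p (\<xi> - t))" for \<xi>
  proof (rule Bochner_Integration.integrable_bound)
    show "integrable lborel J" using J unfolding kernel_J_def by auto
    show "(\<lambda>t. J t * p (\<xi> - t)) \<in> borel_measurable lborel" by measurable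
    show "AE x in lborel. norm (J x * p (\<xi> - x)) \<le> norm (J x)"
      using pb J unfolding kernel_J_def by (auto simp: abs_mult intro!: mult_left_le)
  qed
  show ?thesis unfolding r
  proof (rule integral_mono[OF i i])
    fix t show "J t * p (\<xi>2 - t) \<le> J t * p (\<xi>1 - t)"
      using J an[of "\<xi>1 - t" "\<xi>2 - t"] le unfolding kernel_J_def by (auto intro: mult_left_mono)
  qed
qed

definition gf where
  "gf J d c M f \<sigma> \<phi> \<xi> = d * (LBINT y:{..0}. J (\<xi> - y) * \<phi> y) + d * \<sigma> * acum J \<xi> + ftilde d c M f (\<phi> \<xi>)"

lemma A_op_gf: "A_op J d c M f \<sigma> \<phi> x = (if 0 \<le> x then \<sigma> else exp (M * x) * \<sigma> + exp (M * x) / c *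
        (LBINT \<xi>=x..0. exp (- M * \<xi>) * gf J d c M f \<sigma> \<phi> \<xi>))"
  unfolding A_op_def gf_def by simp

definition adm :: "real \<Rightarrow> (real \<Rightarrow> real) \<Rightarrow> bool" where
  "adm \<sigma> \<phi> \<longleftrightarrow> antimono \<phi> \<and> (\<forall>y. \<sigma> \<le> \<phi> y \<and> \<phi> y \<le> 1)"

lemma adm_meas: "adm \<sigma> \<phi> \<Longrightarrow> \<phi> \<in> borel_measurable borel"
proof -
  assume "adm \<sigma> \<phi>"
  then have "mono (\<lambda>x. - \<phi> x)" unfolding adm_def antimono_def mono_def by auto
  from borel_measurable_mono[OF this] have "(\<lambda>x. - (- \<phi> x)) \<in> borel_measurable borel"
    by (rule borel_measurable_uminus)
  then show ?thesis by simp
qed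

lemma extd_meas: assumes [measurable]: "\<phi> \<in> borel_measurable borel" shows "extd \<sigma> \<phi> \<in> borel_measurable borel"
  unfolding extd_def[abs_def] by measurable

locale ctx =
  fixes J f :: "real \<Rightarrow> real" and d c M :: real
  assumes dpos: "d > 0" and J: "kernel_J J" and f3: "reaction_f3 f" and cpos: "0 < c"
    and Mpos: "M > 0" and ftm: "strict_mono_on {0..1} (ftilde d c M f)"
begin

lemma f_cont: "continuous_on {0..} f"
proof -
  from f3 obtain f' where "\<forall>u\<ge>0. (f has_real_derivative f' u) (at u within {0..})"
    unfolding reaction_f3_def by auto
  then show ?thesis
    by (auto intro!: continuous_at_imp_continuous_on simp: continuous_on_eq_continuous_within
        intro: DERIV_continuous)
qed


lemma ft0: "ftilde d c M f 0 = 0" using f3 unfolding reaction_f3_def ftilde_def by auto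
lemma ft1: "ftilde d c M f 1 = c * M - d" using f3 unfolding reaction_f3_def ftilde_def by auto
lemma ft_mono: "0 \<le> u \<Longrightarrow> u \<le> v \<Longrightarrow> v \<le> 1 \<Longrightarrow> ftilde d c M f u \<le> ftilde d c M f v"
  using ftm unfolding strict_mono_on_def by (cases "u = v") (auto intro: less_imp_le)
lemma cMd: "0 \<le> c * M - d" using ft_mono[of 0 1] ft0 ft1 by simp
lemma fpos: "0 < u \<Longrightarrow> u < 1 \<Longrightarrow> 0 < f u" using f3 unfolding reaction_f3_def by auto

lemma ft_meas: assumes m[measurable]: "\<phi> \<in> borel_measurable borel" and nn: "\<And>\<xi>. 0 \<le> \<phi> \<xi>"
  shows "(\<lambda>\<xi>. ftilde d c M f (\<phi> \<xi>)) \<in> borel_measurable borel"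
proof -
  have "continuous_on UNIV (\<lambda>u. f (max 0 u))"
    by (rule continuous_on_compose2[OF f_cont]) (auto intro: continuous_intros)
  from borel_measurable_continuous_on[OF this m]
  have [measurable]: "(\<lambda>\<xi>. f (max 0 (\<phi> \<xi>))) \<in> borel_measurable borel" .
  have "(\<lambda>\<xi>. (c * M - d) * \<phi> \<xi> + f (max 0 (\<phi> \<xi>))) \<in> borel_measurable borel" by measurable
  moreover have "\<And>\<xi>. f (max 0 (\<phi> \<xi>)) = f (\<phi> \<xi>)" using nn by (simp add: max_def)
  ultimately show ?thesis unfolding ftilde_def by simp
qed


lemma adm_b: "adm \<sigma> \<phi> \<Longrightarrow> 0 < \<sigma> \<Longrightarrow> \<sigma> \<le> 1 \<Longrightarrow> \<bar>\<phi> y\<bar> \<le> 1"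
  unfolding adm_def by (metis abs_of_nonneg order_trans less_imp_le)

lemma extd_b: "adm \<sigma> \<phi> \<Longrightarrow> 0 < \<sigma> \<Longrightarrow> \<sigma> \<le> 1 \<Longrightarrow> \<bar>extd \<sigma> \<phi> y\<bar> \<le> 1"
  using adm_b[of \<sigma> \<phi> y] unfolding extd_def by auto

lemma gf_eq: assumes a: "adm \<sigma> \<phi>" and s: "0 < \<sigma>" "\<sigma> \<le> 1"
  shows "gf J d c M f \<sigma> \<phi> \<xi> = d * conv J (extd \<sigma> \<phi>) \<xi> + ftilde d c M f (\<phi> \<xi>)"
proof -
  have "(LBINT y:{..0}. J (\<xi> - y) * \<phi> y) + \<sigma> * acum J \<xi> = conv J (extd \<sigma> \<phi>) \<xi>"
    by (rule Cform[OF J adm_meas[OF a] adm_b[OF a s]]) (use s in auto)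
  then show ?thesis unfolding gf_def by (simp add: algebra_simps flip: \<open>_ = conv J (extd \<sigma> \<phi>) \<xi>\<close>)
qed

lemma conv_extd_bounds: assumes a: "adm \<sigma> \<phi>" and s: "0 < \<sigma>" "\<sigma> \<le> 1"
  shows "\<sigma> \<le> conv J (extd \<sigma> \<phi>) \<xi>" "conv J (extd \<sigma> \<phi>) \<xi> \<le> 1"
proof -
  have m: "extd \<sigma> \<phi> \<in> borel_measurable borel" by (rule extd_meas[OF adm_meas[OF a]])
  have "conv J (\<lambda>_. \<sigma>) \<xi> \<le> conv J (extd \<sigma> \<phi>) \<xi>"
    by (rule conv_mono[OF J _ m _ extd_b[OF a s]]) (use a s in \<open>auto simp: adm_def extd_def\<close>)
  then show "\<sigma> \<le> conv J (extd \<sigma> \<phi>) \<xi>" using conv_const[OF J] by simp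
  have "conv J (extd \<sigma> \<phi>) \<xi> \<le> conv J (\<lambda>_. 1) \<xi>"
    by (rule conv_mono[OF J m _ extd_b[OF a s]]) (use a s in \<open>auto simp: adm_def extd_def\<close>)
  then show "conv J (extd \<sigma> \<phi>) \<xi> \<le> 1" using conv_const[OF J] by simp
qed

lemma gf_bounds: assumes a: "adm \<sigma> \<phi>" and s: "0 < \<sigma>" "\<sigma> < 1"
  shows "c * M * \<sigma> \<le> gf J d c M f \<sigma> \<phi> \<xi>" "gf J d c M f \<sigma> \<phi> \<xi> \<le> c * M"
proof -
  have p: "\<sigma> \<le> \<phi> \<xi>" "\<phi> \<xi> \<le> 1" using a unfolding adm_def by auto
  note cb = conv_extd_bounds[OF a s(1) less_imp_le[OF s(2)], of \<xi>]
  have "ftilde d c M f \<sigma> \<le> ftilde d c M f (\<phi> \<xi>)" using ft_mono[of \<sigma> "\<phi> \<xi>"] p s by auto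
  moreover have "(c * M - d) * \<sigma> \<le> ftilde d c M f \<sigma>" using fpos[OF s] unfolding ftilde_def by simp
  moreover have "d * \<sigma> \<le> d * conv J (extd \<sigma> \<phi>) \<xi>" using cb dpos by simp
  ultimately show "c * M * \<sigma> \<le> gf J d c M f \<sigma> \<phi> \<xi>"
    unfolding gf_eq[OF a s(1) less_imp_le[OF s(2)]] by (simp add: algebra_simps)
  have "ftilde d c M f (\<phi> \<xi>) \<le> c * M - d" using ft_mono[of "\<phi> \<xi>" 1] p s ft1 by auto
  moreover have "d * conv J (extd \<sigma> \<phi>) \<xi> \<le> d" using cb dpos by simp
  ultimately show "gf J d c M f \<sigma> \<phi> \<xi> \<le> c * M"
    unfolding gf_eq[OF a s(1) less_imp_le[OF s(2)]] by (simp add: algebra_simps)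
qed

lemma gf_meas: assumes a: "adm \<sigma> \<phi>" and s: "0 < \<sigma>" "\<sigma> < 1"
  shows "gf J d c M f \<sigma> \<phi> \<in> borel_measurable borel"
proof -
  have [measurable]: "conv J (extd \<sigma> \<phi>) \<in> borel_measurable borel"
    by (rule conv_meas[OF J extd_meas[OF adm_meas[OF a]]])
  have [measurable]: "(\<lambda>\<xi>. ftilde d c M f (\<phi> \<xi>)) \<in> borel_measurable borel"
    by (rule ft_meas[OF adm_meas[OF a]]) (use a s in \<open>auto simp: adm_def intro: order_trans[of 0 \<sigma>]\<close>)
  have "(\<lambda>\<xi>. d * conv J (extd \<sigma> \<phi>) \<xi> + ftilde d c M f (\<phi> \<xi>)) \<in> borel_measurable borel" by measurable
  moreover have "gf J d c M f \<sigma> \<phi> = (\<lambda>\<xi>. d * conv J (extd \<sigma> \<phi>) \<xi> + ftilde d c M f (\<phi> \<xi>))"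
    using gf_eq[OF a s(1) less_imp_le[OF s(2)]] by auto
  ultimately show ?thesis by simp
qed

lemma h_sint: assumes a: "adm \<sigma> \<phi>" and s: "0 < \<sigma>" "\<sigma> < 1"
  shows "set_integrable lborel {p..q} (\<lambda>\<xi>. exp (- M * \<xi>) * gf J d c M f \<sigma> \<phi> \<xi>)"
proof -
  have [measurable]: "gf J d c M f \<sigma> \<phi> \<in> borel_measurable borel" by (rule gf_meas[OF a s])
  let ?K = "exp (- M * p) * (c * M)"
  have "integrable lborel (\<lambda>x. ?K * indicator {p..q} x)" 
    by (intro integrable_mult_right integrable_real_indicator) (auto, cases "p \<le> q", auto)
  then show ?thesis unfolding set_integrable_def
  proof (rule Bochner_Integration.integrable_bound)
    show "(\<lambda>x. indicator {p..q} x *\<^sub>R (exp (- M * x) * gf J d c M f \<sigma> \<phi> x)) \<in> borel_measurable lborel"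
      by measurable
    show "AE x in lborel. norm (indicator {p..q} x *\<^sub>R (exp (- M * x) * gf J d c M f \<sigma> \<phi> x))
        \<le> norm (?K * indicator {p..q} x)"
    proof (rule AE_I2)
      fix x
      have g: "0 \<le> gf J d c M f \<sigma> \<phi> x" "gf J d c M f \<sigma> \<phi> x \<le> c * M"
        using gf_bounds[OF a s, of x] cpos Mpos s by (auto intro: order_trans[rotated])
      have "x \<in> {p..q} \<Longrightarrow> exp (- M * x) \<le> exp (- M * p)" using Mpos by simp
      then show "norm (indicator {p..q} x *\<^sub>R (exp (- M * x) * gf J d c M f \<sigma> \<phi> x))
        \<le> norm (?K * indicator {p..q} x)"
        using g cpos Mpos by (auto simp: indicator_def abs_mult intro!: mult_mono)
    qed
  qed
qed

lemma A_rep: assumes a: "adm \<sigma> \<phi>" and s: "0 < \<sigma>" "\<sigma> < 1" and x: "x < 0"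
  shows "A_op J d c M f \<sigma> \<phi> x = exp (M * x) * \<sigma> + exp (M * x) / c *
            integral {x..0} (\<lambda>\<xi>. exp (- M * \<xi>) * gf J d c M f \<sigma> \<phi> \<xi>)"
proof -
  have "(LBINT \<xi>=ereal x..0. exp (- M * \<xi>) * gf J d c M f \<sigma> \<phi> \<xi>) = (LBINT \<xi>=ereal x..ereal 0. exp (- M * \<xi>) * gf J d c M f \<sigma> \<phi> \<xi>)"
    by (simp add: zero_ereal_def)
  also have "\<dots> = (LBINT \<xi>:{x..0}. exp (- M * \<xi>) * gf J d c M f \<sigma> \<phi> \<xi>)"
    using x by (intro interval_integral_Icc) simp
  also have "\<dots> = integral {x..0} (\<lambda>\<xi>. exp (- M * \<xi>) * gf J d c M f \<sigma> \<phi> \<xi>)"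
    by (rule set_borel_integral_eq_integral(2)[OF h_sint[OF a s]])
  finally show ?thesis using x by (simp add: A_op_gf)
qed

lemma h_int: assumes a: "adm \<sigma> \<phi>" and s: "0 < \<sigma>" "\<sigma> < 1"
  shows "(\<lambda>\<xi>. exp (- M * \<xi>) * gf J d c M f \<sigma> \<phi> \<xi>) integrable_on {p..q}"
  using set_borel_integral_eq_integral(1)[OF h_sint[OF a s]] .

lemma exp_int: assumes "x \<le> 0" shows "((\<lambda>\<xi>. exp (- M * \<xi>)) has_integral (exp (- M * x) - 1) / M) {x..0}"
proof -
  have "((\<lambda>\<xi>. exp (- M * \<xi>)) has_integral ((- exp (- M * 0) / M) - (- exp (- M * x) / M))) {x..0}"
    apply (rule fundamental_theorem_of_calculus[OF assms])
    using Mpos by (auto intro!: derivative_eq_intros simp: has_real_derivative_iff_has_vector_derivative[symmetric])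
  then show ?thesis by (simp add: diff_divide_distrib)
qed


lemma A_bounds: assumes a: "adm \<sigma> \<phi>" and s: "0 < \<sigma>" "\<sigma> < 1"
  shows "\<sigma> \<le> A_op J d c M f \<sigma> \<phi> x" "A_op J d c M f \<sigma> \<phi> x \<le> 1"
proof -
  have "\<sigma> \<le> A_op J d c M f \<sigma> \<phi> x \<and> A_op J d c M f \<sigma> \<phi> x \<le> 1"
  proof (cases "x < 0")
    case False then show ?thesis using s by (simp add: A_op_def)
  next
    case True
    let ?h = "\<lambda>\<xi>. exp (- M * \<xi>) * gf J d c M f \<sigma> \<phi> \<xi>"
    let ?I = "integral {x..0} ?h"
    have hI: "(?h has_integral ?I) {x..0}" using h_int[OF a s] by (rule integrable_integral)
    have e: "((\<lambda>\<xi>. exp (- M * \<xi>)) has_integral (exp (- M * x) - 1) / M) {x..0}"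
      using exp_int True by simp
    have "?I \<le> c * M * ((exp (- M * x) - 1) / M)"
      using has_integral_le[OF hI has_integral_mult_right[OF e, of "c * M"]] gf_bounds[OF a s] by auto
    moreover have "c * M * \<sigma> * ((exp (- M * x) - 1) / M) \<le> ?I"
    proof (rule has_integral_le[OF has_integral_mult_right[OF e, of "c * M * \<sigma>"] hI])
      fix \<xi> show "c * M * \<sigma> * exp (- M * \<xi>) \<le> exp (- M * \<xi>) * gf J d c M f \<sigma> \<phi> \<xi>"
        using gf_bounds(1)[OF a s, of \<xi>] by (simp add: mult_ac)
    qed
    moreover have ee: "exp (M * x) * exp (- M * x) = 1" by (simp add: exp_minus field_simps)
    moreover have "0 < exp (M * x)" "exp (M * x) \<le> 1" using True Mpos by (auto simp: mult_pos_neg mult_nonneg_nonpos less_imp_le)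
    ultimately have le1: "?I \<le> c * M * ((exp (- M * x) - 1) / M)" and ge1: "c * M * \<sigma> * ((exp (- M * x) - 1) / M) \<le> ?I"
      and ee: "exp (M * x) * exp (- M * x) = 1" and E: "0 < exp (M * x)" "exp (M * x) \<le> 1" by auto
    have ec: "0 \<le> exp (M * x) / c" using E cpos by simp
    have "exp (M * x) / c * ?I \<le> exp (M * x) / c * (c * M * ((exp (- M * x) - 1) / M))"
      by (rule mult_left_mono[OF le1 ec])
    also have "\<dots> = exp (M * x) * exp (- M * x) - exp (M * x)" using cpos Mpos by (simp add: field_simps)
    finally have 1: "exp (M * x) / c * ?I \<le> 1 - exp (M * x)" using ee by simp
    have "exp (M * x) / c * (c * M * \<sigma> * ((exp (- M * x) - 1) / M)) \<le> exp (M * x) / c * ?I"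
      by (rule mult_left_mono[OF ge1 ec])
    moreover have "exp (M * x) / c * (c * M * \<sigma> * ((exp (- M * x) - 1) / M)) = \<sigma> * (exp (M * x) * exp (- M * x) - exp (M * x))" 
      using cpos Mpos by (simp add: field_simps)
    ultimately have 2: "\<sigma> * (1 - exp (M * x)) \<le> exp (M * x) / c * ?I" using ee by simp
    have 3: "exp (M * x) * \<sigma> \<le> exp (M * x)" using E s by simp
    have 4: "\<sigma> - \<sigma> * exp (M * x) \<le> exp (M * x) / c * ?I" using 2 by (simp add: right_diff_distrib)
    have 5: "exp (M * x) * \<sigma> = \<sigma> * exp (M * x)" by simp
    show ?thesis unfolding A_rep[OF a s True] using 1 3 4 5 by linarith
  qed
  then show "\<sigma> \<le> A_op J d c M f \<sigma> \<phi> x" "A_op J d c M f \<sigma> \<phi> x \<le> 1" by auto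
qed


lemma adm_A: assumes a: "adm \<sigma> \<phi>" and s: "0 < \<sigma>" "\<sigma> < 1"
  shows "\<sigma> \<le> A_op J d c M f \<sigma> \<phi> x \<and> A_op J d c M f \<sigma> \<phi> x \<le> 1"
  using A_bounds[OF a s] by auto

lemma A_mono: assumes a1: "adm \<sigma>1 \<phi>" and a2: "adm \<sigma>2 \<theta>" and s: "0 < \<sigma>1" "\<sigma>1 \<le> \<sigma>2" "\<sigma>2 < 1"
  and le: "\<And>y. \<phi> y \<le> \<theta> y"
  shows "A_op J d c M f \<sigma>1 \<phi> x \<le> A_op J d c M f \<sigma>2 \<theta> x"
proof (cases "x < 0")
  case False then show ?thesis using s by (simp add: A_op_def)
next
  case True
  have s1: "0 < \<sigma>1" "\<sigma>1 < 1" and s2: "0 < \<sigma>2" "\<sigma>2 < 1" using s by auto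
  have g: "gf J d c M f \<sigma>1 \<phi> \<xi> \<le> gf J d c M f \<sigma>2 \<theta> \<xi>" for \<xi>
  proof -
    have "conv J (extd \<sigma>1 \<phi>) \<xi> \<le> conv J (extd \<sigma>2 \<theta>) \<xi>"
      by (rule conv_mono[OF J extd_meas[OF adm_meas[OF a1]] extd_meas[OF adm_meas[OF a2]]
            extd_b[OF a1 s1(1)] extd_b[OF a2 s2(1)]])
         (use s le in \<open>auto simp: extd_def\<close>)
    moreover have "ftilde d c M f (\<phi> \<xi>) \<le> ftilde d c M f (\<theta> \<xi>)"
      using ft_mono[of "\<phi> \<xi>" "\<theta> \<xi>"] a1 a2 le s unfolding adm_def
      by (meson less_imp_le order_trans)
    ultimately show ?thesis unfolding gf_eq[OF a1 s1(1) less_imp_le[OF s1(2)]] gf_eq[OF a2 s2(1) less_imp_le[OF s2(2)]]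
      using dpos by (simp add: add_mono)
  qed
  have "integral {x..0} (\<lambda>\<xi>. exp (- M * \<xi>) * gf J d c M f \<sigma>1 \<phi> \<xi>)
      \<le> integral {x..0} (\<lambda>\<xi>. exp (- M * \<xi>) * gf J d c M f \<sigma>2 \<theta> \<xi>)"
    by (rule integral_le[OF h_int[OF a1 s1] h_int[OF a2 s2]]) (simp add: g)
  then have "exp (M * x) / c * integral {x..0} (\<lambda>\<xi>. exp (- M * \<xi>) * gf J d c M f \<sigma>1 \<phi> \<xi>)
      \<le> exp (M * x) / c * integral {x..0} (\<lambda>\<xi>. exp (- M * \<xi>) * gf J d c M f \<sigma>2 \<theta> \<xi>)"
    using cpos by (intro mult_left_mono) auto
  moreover have "exp (M * x) * \<sigma>1 \<le> exp (M * x) * \<sigma>2" using s by simp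
  ultimately show ?thesis unfolding A_rep[OF a1 s1 True] A_rep[OF a2 s2 True] by linarith
qed

lemma gf_anti: assumes a: "adm \<sigma> \<phi>" and s: "0 < \<sigma>" "\<sigma> < 1" and le: "\<xi>1 \<le> \<xi>2"
  shows "gf J d c M f \<sigma> \<phi> \<xi>2 \<le> gf J d c M f \<sigma> \<phi> \<xi>1"
proof -
  have "conv J (extd \<sigma> \<phi>) \<xi>2 \<le> conv J (extd \<sigma> \<phi>) \<xi>1"
  proof (rule conv_anti[OF J extd_meas[OF adm_meas[OF a]] extd_b[OF a s(1)] _ le])
    show "\<sigma> \<le> 1" using s by simp
    fix x y :: real assume "x \<le> y"
    then show "extd \<sigma> \<phi> y \<le> extd \<sigma> \<phi> x" using a unfolding adm_def extd_def antimono_def by auto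
  qed
  moreover have "ftilde d c M f (\<phi> \<xi>2) \<le> ftilde d c M f (\<phi> \<xi>1)"
    using ft_mono[of "\<phi> \<xi>2" "\<phi> \<xi>1"] a le s unfolding adm_def antimono_def
    by (meson less_imp_le order_trans)
  ultimately show ?thesis unfolding gf_eq[OF a s(1) less_imp_le[OF s(2)]]
    using dpos by (simp add: add_mono)
qed

lemma A_anti: assumes a: "adm \<sigma> \<phi>" and s: "0 < \<sigma>" "\<sigma> < 1"
  shows "antimono (A_op J d c M f \<sigma> \<phi>)"
proof (rule antimonoI)
  fix x1 x2 :: real assume x12: "x1 \<le> x2"
  show "A_op J d c M f \<sigma> \<phi> x2 \<le> A_op J d c M f \<sigma> \<phi> x1"
  proof (cases "x2 < 0")
    case False then show ?thesis using A_bounds(1)[OF a s, of x1] by (simp add: A_op_def)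
  next
    case True
    then have x1: "x1 < 0" using x12 by simp
    define \<delta> where "\<delta> = x2 - x1"
    have \<delta>: "0 \<le> \<delta>" "x1 \<le> - \<delta>" "- \<delta> \<le> 0" using x12 True unfolding \<delta>_def by auto
    let ?G = "gf J d c M f \<sigma> \<phi>"
    let ?h = "\<lambda>\<xi>. exp (- M * \<xi>) * ?G \<xi>"
    have hi: "?h integrable_on {p..q}" for p q by (rule h_int[OF a s])
    have split: "integral {x1..0} ?h = integral {x1..-\<delta>} ?h + integral {-\<delta>..0} ?h"
      using Henstock_Kurzweil_Integration.integral_combine[OF \<delta>(2,3) hi] by simp
    have sh: "integral {x1..-\<delta>} ?h = integral {x2..0} (\<lambda>\<eta>. ?h (\<eta> + (- \<delta>)))"
      using integral_shift_real_ivl[of x1 "-\<delta>" "-\<delta>" ?h] unfolding \<delta>_def by simp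
    have shi: "(\<lambda>\<eta>. ?h (\<eta> + (- \<delta>))) integrable_on {x2..0}"
      using integrable_shift_real_ivl[OF hi[of x1 "-\<delta>"], of "-\<delta>"] unfolding \<delta>_def by simp
    have "integral {x2..0} (\<lambda>\<eta>. exp (M * \<delta>) * ?h \<eta>) \<le> integral {x2..0} (\<lambda>\<eta>. ?h (\<eta> + (- \<delta>)))"
    proof (rule integral_le[OF integrable_on_mult_right[OF hi] shi])
      fix \<eta> assume "\<eta> \<in> {x2..0}"
      have "?G \<eta> \<le> ?G (\<eta> + - \<delta>)" by (rule gf_anti[OF a s]) (use \<delta> in auto)
      moreover have "exp (- M * (\<eta> + - \<delta>)) = exp (M * \<delta>) * exp (- M * \<eta>)"
        by (simp add: algebra_simps flip: exp_add)
      ultimately show "exp (M * \<delta>) * ?h \<eta> \<le> ?h (\<eta> + (- \<delta>))" by simp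
    qed
    then have p1: "exp (M * \<delta>) * integral {x2..0} ?h \<le> integral {x1..-\<delta>} ?h"
      unfolding sh by simp
    have e: "((\<lambda>\<xi>. exp (- M * \<xi>)) has_integral (exp (- M * (-\<delta>)) - 1) / M) {-\<delta>..0}"
      using exp_int[of "-\<delta>"] \<delta> by simp
    have p2: "c * M * \<sigma> * ((exp (M * \<delta>) - 1) / M) \<le> integral {-\<delta>..0} ?h"
    proof (rule has_integral_le[OF _ integrable_integral[OF hi]])
      show "((\<lambda>\<xi>. c * M * \<sigma> * exp (- M * \<xi>)) has_integral c * M * \<sigma> * ((exp (M * \<delta>) - 1) / M)) {- \<delta>..0}"
        using has_integral_mult_right[OF e, of "c * M * \<sigma>"] by simp
      fix \<xi> show "c * M * \<sigma> * exp (- M * \<xi>) \<le> ?h \<xi>"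
        using gf_bounds(1)[OF a s, of \<xi>] by (simp add: mult_ac)
    qed
    have "exp (M * x1) / c * (exp (M * \<delta>) * integral {x2..0} ?h + c * M * \<sigma> * ((exp (M * \<delta>) - 1) / M))
       \<le> exp (M * x1) / c * integral {x1..0} ?h"
      unfolding split using p1 p2 cpos by (intro mult_left_mono) auto
    moreover have "exp (M * x1) * exp (M * \<delta>) = exp (M * x2)" unfolding \<delta>_def
      by (simp add: algebra_simps flip: exp_add)
    moreover have "exp (M * x1) / c * (exp (M * \<delta>) * integral {x2..0} ?h + c * M * \<sigma> * ((exp (M * \<delta>) - 1) / M))
       = exp (M * x1) * exp (M * \<delta>) / c * integral {x2..0} ?h + \<sigma> * (exp (M * x1) * exp (M * \<delta>) - exp (M * x1))"
      using cpos Mpos by (simp add: field_simps)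
    ultimately have "exp (M * x2) / c * integral {x2..0} ?h + \<sigma> * (exp (M * x2) - exp (M * x1))
       \<le> exp (M * x1) / c * integral {x1..0} ?h" by simp
    then show ?thesis unfolding A_rep[OF a s True] A_rep[OF a s x1] by (simp add: algebra_simps)
  qed
qed


end

lemma tw_bounds: assumes tw: "travwave J d f cs \<psi>" shows "0 \<le> \<psi> x" "\<psi> x \<le> 1"
proof -
  have an: "antimono \<psi>" and l1: "(\<psi> \<longlongrightarrow> 1) at_bot" and l0: "(\<psi> \<longlongrightarrow> 0) at_top"
    using tw unfolding travwave_def by auto
  have "eventually (\<lambda>y. \<psi> x \<le> \<psi> y) at_bot"
    unfolding eventually_at_bot_linorder using an by (auto simp: antimono_def)
  from tendsto_lowerbound[OF l1 this] show "\<psi> x \<le> 1" by simp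
  have "eventually (\<lambda>y. \<psi> y \<le> \<psi> x) at_top"
    unfolding eventually_at_top_linorder using an by (auto simp: antimono_def)
  from tendsto_upperbound[OF l0 this] show "0 \<le> \<psi> x" by simp
qed

lemma tw_deriv: assumes tw: "travwave J d f cs \<psi>"
  shows "(\<psi> has_real_derivative deriv \<psi> x) (at x)" "deriv \<psi> x \<le> 0"
proof -
  show D: "(\<psi> has_real_derivative deriv \<psi> x) (at x)"
    using tw unfolding travwave_def by (simp add: DERIV_deriv_iff_real_differentiable)
  show "deriv \<psi> x \<le> 0"
  proof (rule ccontr)
    assume "\<not> deriv \<psi> x \<le> 0"
    then obtain e where "e > 0" "\<forall>h>0. h < e \<longrightarrow> \<psi> x < \<psi> (x + h)"
      using DERIV_pos_inc_right[OF D] by auto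
    then have "\<psi> x < \<psi> (x + e / 2)" by auto
    moreover have "\<psi> (x + e / 2) \<le> \<psi> x" using tw \<open>e > 0\<close> unfolding travwave_def antimono_def by auto
    ultimately show False by simp
  qed
qed

lemma tw_meas: assumes tw: "travwave J d f cs \<psi>" shows "(\<lambda>y. \<psi> (y + s)) \<in> borel_measurable borel"
proof -
  have "mono (\<lambda>x. - \<psi> (x + s))" using tw unfolding travwave_def antimono_def mono_def by auto
  from borel_measurable_mono[OF this] have "(\<lambda>x. - (- \<psi> (x + s))) \<in> borel_measurable borel"
    by (rule borel_measurable_uminus)
  then show ?thesis by simp
qed

lemma adm0: assumes tw: "travwave J d f cs \<psi>" and s: "0 < \<sigma>" "\<sigma> < 1"
  shows "adm \<sigma> (\<lambda>z. max (\<psi> (z + s)) \<sigma>)"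
proof -
  have an: "antimono \<psi>" using tw unfolding travwave_def by auto
  have "antimono (\<lambda>z. max (\<psi> (z + s)) \<sigma>)"
    by (rule antimonoI, rule max.mono, rule antimonoD[OF an]) auto
  then show ?thesis using tw_bounds[OF tw] s unfolding adm_def by auto
qed

context ctx begin

lemma A_sub: assumes tw: "travwave J d f cs \<psi>" and ccs: "c < cs" and ps: "\<psi> s = \<sigma>"
  and s: "0 < \<sigma>" "\<sigma> < 1"
  shows "max (\<psi> (x + s)) \<sigma> \<le> A_op J d c M f \<sigma> (\<lambda>z. max (\<psi> (z + s)) \<sigma>) x"
proof -
  let ?p = "\<lambda>z. max (\<psi> (z + s)) \<sigma>"
  have a: "adm \<sigma> ?p" by (rule adm0[OF tw s])
  have an: "antimono \<psi>" using tw unfolding travwave_def by auto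
  have pn: "?p z = \<psi> (z + s)" if "z \<le> 0" for z
    using antimonoD[OF an, of "z + s" s] that ps by (auto simp: max_def)
  show ?thesis
  proof (cases "x < 0")
    case False
    then have "\<psi> (x + s) \<le> \<sigma>" using an ps unfolding antimono_def by auto
    then show ?thesis using False by (simp add: A_op_def)
  next
    case True
    let ?G = "gf J d c M f \<sigma> ?p"
    let ?h = "\<lambda>\<xi>. exp (- M * \<xi>) * ?G \<xi>"
    have Gge: "c * M * \<psi> (\<xi> + s) - c * deriv \<psi> (\<xi> + s) \<le> ?G \<xi>" if "\<xi> \<le> 0" for \<xi>
    proof -
      have c1: "conv J (\<lambda>y. \<psi> (y + s)) \<xi> \<le> conv J (extd \<sigma> ?p) \<xi>"
      proof (rule conv_mono[OF J tw_meas[OF tw] extd_meas[OF adm_meas[OF a]] _ extd_b[OF a s(1)]])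
        show "\<bar>\<psi> (y + s)\<bar> \<le> 1" for y using tw_bounds[OF tw] by auto
        show "\<sigma> \<le> 1" using s by simp
        show "\<psi> (y + s) \<le> extd \<sigma> ?p y" for y
          using an ps unfolding extd_def antimono_def by auto
      qed
      have c2: "conv J (\<lambda>y. \<psi> (y + s)) \<xi> = (LINT y|lborel. J (\<xi> + s - y) * \<psi> y)"
      proof -
        have "(LINT y|lborel. J (\<xi> + s - y) * \<psi> y) = \<bar>1\<bar> *\<^sub>R (LINT y|lborel. J (\<xi> + s - (s + 1 * y)) * \<psi> (s + 1 * y))"
          by (rule lborel_integral_real_affine) simp
        then show ?thesis unfolding conv_def by (simp add: add.commute)
      qed
      have twe: "d * (LINT y|lborel. J (\<xi> + s - y) * \<psi> y) - d * \<psi> (\<xi> + s) + cs * deriv \<psi> (\<xi> + s) + f (\<psi> (\<xi> + s)) = 0"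
        using tw unfolding travwave_def by auto
      have dn: "deriv \<psi> (\<xi> + s) \<le> 0" by (rule tw_deriv(2)[OF tw])
      have "cs * deriv \<psi> (\<xi> + s) \<le> c * deriv \<psi> (\<xi> + s)" using dn ccs
        by (simp add: mult_right_mono_neg)
      moreover have "d * conv J (\<lambda>y. \<psi> (y + s)) \<xi> \<le> d * conv J (extd \<sigma> ?p) \<xi>" using c1 dpos by simp
      ultimately show ?thesis unfolding gf_eq[OF a s(1) less_imp_le[OF s(2)]] pn[OF that] ftilde_def
        using twe c2 by (simp add: algebra_simps)
    qed
    have FTC: "((\<lambda>\<xi>. M * exp (- M * \<xi>) * \<psi> (\<xi> + s) - exp (- M * \<xi>) * deriv \<psi> (\<xi> + s)) has_integral
        ((- exp (- M * 0) * \<psi> (0 + s)) - (- exp (- M * x) * \<psi> (x + s)))) {x..0}"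
    proof (rule fundamental_theorem_of_calculus)
      show "x \<le> 0" using True by simp
      fix \<xi> assume "\<xi> \<in> {x..0}"
      have D: "(\<psi> has_real_derivative deriv \<psi> (\<xi> + s)) (at (\<xi> + s))" by (rule tw_deriv(1)[OF tw])
      have "((\<lambda>\<xi>. - exp (- M * \<xi>) * \<psi> (\<xi> + s)) has_real_derivative
          (M * exp (- M * \<xi>) * \<psi> (\<xi> + s) - exp (- M * \<xi>) * deriv \<psi> (\<xi> + s))) (at \<xi>)"
      proof -
        have D2: "((\<lambda>\<xi>. \<psi> (\<xi> + s)) has_real_derivative deriv \<psi> (\<xi> + s)) (at \<xi>)"
          using D by (simp add: DERIV_shift)
        have E: "((\<lambda>\<xi>. - exp (- M * \<xi>)) has_real_derivative (M * exp (- M * \<xi>))) (at \<xi>)"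
          by (auto intro!: derivative_eq_intros)
        show ?thesis by (rule DERIV_cong[OF DERIV_mult[OF E D2]]) (simp add: algebra_simps)
      qed
      then show "((\<lambda>\<xi>. - exp (- M * \<xi>) * \<psi> (\<xi> + s)) has_vector_derivative
          (M * exp (- M * \<xi>) * \<psi> (\<xi> + s) - exp (- M * \<xi>) * deriv \<psi> (\<xi> + s))) (at \<xi> within {x..0})"
        by (simp add: has_real_derivative_iff_has_vector_derivative[symmetric] has_field_derivative_at_within)
    qed
    have "c * (exp (- M * x) * \<psi> (x + s) - \<sigma>) \<le> integral {x..0} ?h"
    proof (rule has_integral_le[OF _ integrable_integral[OF h_int[OF a s]]])
      show "((\<lambda>\<xi>. c * (M * exp (- M * \<xi>) * \<psi> (\<xi> + s) - exp (- M * \<xi>) * deriv \<psi> (\<xi> + s))) has_integral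
          c * (exp (- M * x) * \<psi> (x + s) - \<sigma>)) {x..0}"
        using has_integral_mult_right[OF FTC, of c] ps by simp
      fix \<xi> assume "\<xi> \<in> {x..0}"
      then have "c * M * \<psi> (\<xi> + s) - c * deriv \<psi> (\<xi> + s) \<le> ?G \<xi>" using Gge by auto
      from mult_left_mono[OF this, of "exp (- M * \<xi>)"]
      show "c * (M * exp (- M * \<xi>) * \<psi> (\<xi> + s) - exp (- M * \<xi>) * deriv \<psi> (\<xi> + s)) \<le> ?h \<xi>"
        by (simp add: algebra_simps)
    qed
    then have "exp (M * x) / c * (c * (exp (- M * x) * \<psi> (x + s) - \<sigma>)) \<le> exp (M * x) / c * integral {x..0} ?h"
      using cpos by (intro mult_left_mono) auto
    moreover have "exp (M * x) / c * (c * (exp (- M * x) * \<psi> (x + s) - \<sigma>)) = \<psi> (x + s) - exp (M * x) * \<sigma>"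
      using cpos by (simp add: field_simps exp_minus)
    ultimately show ?thesis unfolding A_rep[OF a s True] pn[OF less_imp_le[OF True]] by simp
  qed
qed


lemma iter_adm: assumes "adm \<sigma> \<phi>" "0 < \<sigma>" "\<sigma> < 1"
  shows "adm \<sigma> ((A_op J d c M f \<sigma> ^^ n) \<phi>)"
proof (induction n)
  case 0 then show ?case using assms by simp
next
  case (Suc n)
  then show ?case using A_anti[OF Suc assms(2,3)] A_bounds[OF Suc assms(2,3)]
    unfolding adm_def by simp
qed

lemma iter_mono: assumes a1: "adm \<sigma>1 \<phi>" and a2: "adm \<sigma>2 \<theta>" and s: "0 < \<sigma>1" "\<sigma>1 \<le> \<sigma>2" "\<sigma>2 < 1"
  and le: "\<And>y. \<phi> y \<le> \<theta> y"
  shows "(A_op J d c M f \<sigma>1 ^^ n) \<phi> x \<le> (A_op J d c M f \<sigma>2 ^^ n) \<theta> x"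
proof (induction n arbitrary: x)
  case 0 then show ?case using le by simp
next
  case (Suc n)
  have s1: "0 < \<sigma>1" "\<sigma>1 < 1" and s2: "0 < \<sigma>2" "\<sigma>2 < 1" using s by auto
  show ?case using A_mono[OF iter_adm[OF a1 s1] iter_adm[OF a2 s2] s Suc] by simp
qed

lemma iter_inc: assumes tw: "travwave J d f cs \<psi>" and ccs: "c < cs" and ps: "\<psi> s = \<sigma>"
  and s: "0 < \<sigma>" "\<sigma> < 1"
  shows "(A_op J d c M f \<sigma> ^^ n) (\<lambda>z. max (\<psi> (z + s)) \<sigma>) x \<le> (A_op J d c M f \<sigma> ^^ Suc n) (\<lambda>z. max (\<psi> (z + s)) \<sigma>) x"
proof (induction n arbitrary: x)
  case 0 then show ?case using A_sub[OF tw ccs ps s] by simp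
next
  case (Suc n)
  have a: "adm \<sigma> ((A_op J d c M f \<sigma> ^^ k) (\<lambda>z. max (\<psi> (z + s)) \<sigma>))" for k
    by (rule iter_adm[OF adm0[OF tw s] s])
  show ?case using A_mono[OF a a s(1) order_refl s(2) Suc] by simp
qed

lemma iter_conv: assumes tw: "travwave J d f cs \<psi>" and ccs: "c < cs" and ps: "\<psi> s = \<sigma>"
  and s: "0 < \<sigma>" "\<sigma> < 1"
  shows "(\<lambda>n. (A_op J d c M f \<sigma> ^^ n) (\<lambda>z. max (\<psi> (z + s)) \<sigma>) x) \<longlonglongrightarrow>
     lim (\<lambda>n. (A_op J d c M f \<sigma> ^^ n) (\<lambda>z. max (\<psi> (z + s)) \<sigma>) x)"
proof -
  have "incseq (\<lambda>n. (A_op J d c M f \<sigma> ^^ n) (\<lambda>z. max (\<psi> (z + s)) \<sigma>) x)"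
    using iter_inc[OF tw ccs ps s] by (simp add: incseq_Suc_iff)
  moreover have "\<forall>n. (A_op J d c M f \<sigma> ^^ n) (\<lambda>z. max (\<psi> (z + s)) \<sigma>) x \<le> 1"
    using iter_adm[OF adm0[OF tw s] s] unfolding adm_def by auto
  ultimately obtain L where "(\<lambda>n. (A_op J d c M f \<sigma> ^^ n) (\<lambda>z. max (\<psi> (z + s)) \<sigma>) x) \<longlonglongrightarrow> L"
    by (rule incseq_convergent)
  then show ?thesis using convergent_LIMSEQ_iff convergentI by blast
qed

end

theorem lemma2p2:
  fixes J f \<psi> sh :: "real \<Rightarrow> real" and d c M :: real
  assumes "d > 0" and "kernel_J J" and "kernel_J2 J" and "reaction_f3 f"
    and "0 < c" and "c < min_speed J d f"
    and "M > 0" and "strict_mono_on {0..1} (ftilde d c M f)"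
    and "travwave J d f (min_speed J d f) \<psi>"
    and "\<And>\<sigma>. 0 < \<sigma> \<Longrightarrow> \<sigma> < 1 \<Longrightarrow> \<psi> (sh \<sigma>) = \<sigma>"
  shows "\<exists>\<delta>0. 0 < \<delta>0 \<and> \<delta>0 \<le> 1 \<and>
           (\<forall>\<sigma> x y. 0 < \<sigma> \<and> \<sigma> < \<delta>0 \<and> x \<le> y \<and> y \<le> 0 \<longrightarrow>
              phi_sig J d c M f \<psi> sh \<sigma> x \<ge> phi_sig J d c M f \<psi> sh \<sigma> y)
         \<and> (\<forall>\<sigma>1 \<sigma>2 x. 0 < \<sigma>1 \<and> \<sigma>1 \<le> \<sigma>2 \<and> \<sigma>2 < 1 \<and> x \<le> 0 \<longrightarrow>
              phi_sig J d c M f \<psi> sh \<sigma>1 x \<le> phi_sig J d c M f \<psi> sh \<sigma>2 x)"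
proof -
  interpret ctx J f d c M using assms by unfold_locales auto
  note tw = assms(9) and ccs = assms(6) and ps = assms(10)
  let ?P = "\<lambda>\<sigma> n. (A_op J d c M f \<sigma> ^^ n) (\<lambda>z. max (\<psi> (z + sh \<sigma>)) \<sigma>)"
  have ph: "phi_sig J d c M f \<psi> sh \<sigma> x = lim (\<lambda>n. ?P \<sigma> n x)" for \<sigma> x
    unfolding phi_sig_def by simp
  have L: "(\<lambda>n. ?P \<sigma> n x) \<longlonglongrightarrow> phi_sig J d c M f \<psi> sh \<sigma> x" if "0 < \<sigma>" "\<sigma> < 1" for \<sigma> x
    unfolding ph by (rule iter_conv[OF tw ccs ps[OF that] that])
  have part1: "phi_sig J d c M f \<psi> sh \<sigma> y \<le> phi_sig J d c M f \<psi> sh \<sigma> x"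
    if "0 < \<sigma>" "\<sigma> < 1" "x \<le> y" for \<sigma> x y
  proof (rule LIMSEQ_le[OF L[OF that(1,2)] L[OF that(1,2)]])
    have "adm \<sigma> (?P \<sigma> n)" for n by (rule iter_adm[OF adm0[OF tw that(1,2)] that(1,2)])
    then show "\<exists>N. \<forall>n\<ge>N. ?P \<sigma> n y \<le> ?P \<sigma> n x" using that(3) unfolding adm_def antimono_def by auto
  qed
  have part2: "phi_sig J d c M f \<psi> sh \<sigma>1 x \<le> phi_sig J d c M f \<psi> sh \<sigma>2 x"
    if "0 < \<sigma>1" "\<sigma>1 \<le> \<sigma>2" "\<sigma>2 < 1" for \<sigma>1 \<sigma>2 x
  proof -
    have s1: "0 < \<sigma>1" "\<sigma>1 < 1" and s2: "0 < \<sigma>2" "\<sigma>2 < 1" using that by auto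
    have an: "antimono \<psi>" using tw unfolding travwave_def by auto
    have init: "max (\<psi> (z + sh \<sigma>1)) \<sigma>1 \<le> max (\<psi> (z + sh \<sigma>2)) \<sigma>2" for z
    proof (cases "\<sigma>1 = \<sigma>2")
      case True then show ?thesis by simp
    next
      case False
      then have lt: "\<sigma>1 < \<sigma>2" using that by simp
      have "sh \<sigma>2 \<le> sh \<sigma>1"
      proof (rule ccontr)
        assume "\<not> sh \<sigma>2 \<le> sh \<sigma>1"
        then have "\<psi> (sh \<sigma>2) \<le> \<psi> (sh \<sigma>1)" using antimonoD[OF an, of "sh \<sigma>1" "sh \<sigma>2"] by simp
        then show False using ps[OF s1] ps[OF s2] lt by simp
      qed
      then have "\<psi> (z + sh \<sigma>1) \<le> \<psi> (z + sh \<sigma>2)" using antimonoD[OF an, of "z + sh \<sigma>2" "z + sh \<sigma>1"] by simp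
      then show ?thesis using lt by (auto simp: max_def)
    qed
    show ?thesis
    proof (rule LIMSEQ_le[OF L[OF s1] L[OF s2]])
      show "\<exists>N. \<forall>n\<ge>N. ?P \<sigma>1 n x \<le> ?P \<sigma>2 n x"
        using iter_mono[OF adm0[OF tw s1] adm0[OF tw s2] that init] by auto
    qed
  qed
  show ?thesis
    by (rule exI[of _ 1]) (use part1 part2 in auto)
qed

end
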